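(* In the discrete setting of the context, consider $$\widetilde{\mathbf{P}}^{-1}\frac{d\mathbf{Q}}{dt}=\sum_{\xi}D_{-\xi}\,\mathbf{F}_\xi(\mathbf{Q})+\sum_{\xi}\mathbf{B}^h_\xi(\mathbf{Q})+\sum_{\xi}\big(\mathbf{SAT}_{\xi,0}+\mathbf{SAT}_{\xi,n_\xi}\big),$$ where, for $a\in\{0,n_\xi\}$, $\mathbf{SAT}_{\xi,a}$ vanishes except at grid points with $\xi$-index $a$, where it equals $-\frac{1}{h^{(\xi)}_a}J\sqrt{\xi_x^2+\xi_y^2+\xi_z^2}\,\mathbf{s}_a$ with $$\mathbf{s}_0=\big(G_x,G_y,G_z,-n_x\widetilde G_x,-n_y\widetilde G_y,-n_z\widetilde G_z,-(n_y\widetilde G_x+n_x\widetilde G_y),-(n_z\widetilde G_x+n_x\widetilde G_z),-(n_z\widetilde G_y+n_y\widetilde G_z)\big)^T,$$ $$\mathbf{s}_{n_\xi}=\big(G_x,G_y,G_z,n_x\widetilde G_x,n_y\widetilde G_y,n_z\widetilde G_z,n_y\widetilde G_x+n_x\widetilde G_y,n_z\widetilde G_x+n_x\widetilde G_z,n_z\widetilde G_y+n_y\widetilde G_z\big)^T,$$ and $\mathbf{G},\widetilde{\mathbf{G}}$ are the penalty vectors defined in the context (computed at that face point). Then every differentiable solution satisfies $$\frac{dE_h}{dt}=F_{luc}+\sum_{\xi\in\{q,r,s\}}\Big(\mathbb{I}_{\xi,n_\xi}(\widehat{\mathbf{v}}^T\widehat{\mathbf{T}})-\mathbb{I}_{\xi,0}(\widehat{\mathbf{v}}^T\widehat{\mathbf{T}})\Big)\le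 0,\qquad F_{luc}:=-\sum_{\xi\in\{q,r,s\}}\sum_{a\in\{0,n_\xi\}}\mathbb{I}_{\xi,a}\Big(\sum_{\eta\in\{n,m,l\}}\frac{G_\eta^2}{Z_\eta}\Big)\le0,$$ where $\widehat{\mathbf{v}}^T\widehat{\mathbf{T}}=\sum_{\eta}\widehat v_\eta\widehat T_\eta$.
   Context: Discrete setting: for $\xi\in\{q,r,s\}$ fix $n_\xi\ge1$, a diagonal matrix $H_\xi=\mathrm{diag}(h^{(\xi)}_0,\dots,h^{(\xi)}_{n_\xi})$ with positive entries, and real $(n_\xi+1)\times(n_\xi+1)$ matrices $D_{+\xi},D_{-\xi}$ with $(D_{+\xi}f)^TH_\xi g+f^TH_\xi(D_{-\xi}g)=f_{n_\xi}g_{n_\xi}-f_0g_0$ for all $f,g\in\mathbb{R}^{n_\xi+1}$. A 3D grid function $f=(f_{ijk})$ has $0\le i\le n_q$, $0\le j\le n_r$, $0\le k\le n_s$; $D_{\pm q}$ acts on the index $i$, i.e. $(D_{\pm q}f)_{ijk}=\sum_{i'}(D_{\pm q})_{ii'}f_{i'jk}$, and similarly $D_{\pm r}$ on $j$ and $D_{\pm s}$ on $k$; applied to vector-valued grid functions they act componentwise. Given are grid functions $J_{ijk}>0$, for each $\xi$ metric values $(\xi_x,\xi_y,\xi_z)_{ijk}\in\mathbb{R}^3\setminus\{0\}$, density $\rho_{ijk}>0$ and symmetric positive definite $6\times6$ compliance matrices $\mathbf{S}_{ijk}$; $\widetilde{\mathbf{P}}^{-1}_{ijk}=J_{ijk}\,\mathrm{diag}(\rho_{ijk}I_3,\mathbf{S}_{ijk})$.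 The unknown is $\mathbf{Q}_{ijk}=(\mathbf{v},\boldsymbol\sigma)_{ijk}$ with $\mathbf{v}=(v_x,v_y,v_z)$, $\boldsymbol\sigma=(\sigma_{xx},\sigma_{yy},\sigma_{zz},\sigma_{xy},\sigma_{xz},\sigma_{yz})$, and $\boldsymbol\sigma_{\mathrm{mat}}$ the symmetric $3\times3$ stress matrix. Pointwise flux: $\mathbf{F}_\xi(\mathbf{Q})$ has first three entries $J(\xi_x\sigma_{xx}+\xi_y\sigma_{xy}+\xi_z\sigma_{xz})$, $J(\xi_x\sigma_{xy}+\xi_y\sigma_{yy}+\xi_z\sigma_{yz})$, $J(\xi_x\sigma_{xz}+\xi_y\sigma_{yz}+\xi_z\sigma_{zz})$ and last six entries $0$. Discrete non-conservative term: with $w_\alpha=D_{+\xi}v_\alpha$, $\mathbf{B}^h_\xi(\mathbf{Q})$ has first three entries $0$ and entries 4–9 equal to $J\xi_xw_x$, $J\xi_yw_y$, $J\xi_zw_z$, $J(\xi_yw_x+\xi_xw_y)$, $J(\xi_zw_x+\xi_xw_z)$, $J(\xi_zw_y+\xi_yw_z)$. Discrete energy: $E_h=\frac12\sum_{i,j,k}h^{(q)}_ih^{(r)}_jh^{(s)}_k\,\mathbf{Q}_{ijk}^T\widetilde{\mathbf{P}}^{-1}_{ijk}\mathbf{Q}_{ijk}$. Face cubature: for $a\in\{0,n_q\}$, $\mathbb{I}_{q,a}(f)=\sum_{j,k}h^{(r)}_jh^{(s)}_k\,J_{ajk}\sqrt{q_x^2+q_y^2+q_z^2}\big|_{ajk}\,f_{ajk}$;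 analogously $\mathbb{I}_{r,a}(f)=\sum_{i,k}h^{(q)}_ih^{(s)}_kJ_{iak}\sqrt{r_x^2+r_y^2+r_z^2}|_{iak}f_{iak}$ for $a\in\{0,n_r\}$ and $\mathbb{I}_{s,a}(f)=\sum_{i,j}h^{(q)}_ih^{(r)}_jJ_{ija}\sqrt{s_x^2+s_y^2+s_z^2}|_{ija}f_{ija}$ for $a\in\{0,n_s\}$. Boundary data at each grid point on a face of direction $\xi$ with index $a\in\{0,n_\xi\}$: $\mathbf{n}=(n_x,n_y,n_z)^T=(\xi_x,\xi_y,\xi_z)^T/\sqrt{\xi_x^2+\xi_y^2+\xi_z^2}$, $\mathbf{T}=\boldsymbol\sigma_{\mathrm{mat}}\mathbf{n}$; $(\mathbf{n},\mathbf{m},\mathbf{l})$ is any orthonormal basis of $\mathbb{R}^3$, $\mathbf{R}$ the orthogonal matrix with rows $\mathbf{n}^T,\mathbf{m}^T,\mathbf{l}^T$, $v_\eta=(\mathbf{R}\mathbf{v})_\eta$, $T_\eta=(\mathbf{R}\mathbf{T})_\eta$, $\eta\in\{n,m,l\}$. Given impedances $Z_\eta>0$ and parameters $\gamma_\eta\in[-1,1]$ (prescribing the boundary conditions $\frac{Z_\eta}{2}(1-\gamma_\eta)v_\eta\mp\frac{1+\gamma_\eta}{2}T_\eta=0$, with $-$ at index $0$ and $+$ at index $n_\xi$). Hat variables: at index $0$, with $q_\eta=\frac12(Z_\eta v_\eta+T_\eta)$, $\widehat v_\eta=(1+\gamma_\eta)q_\eta/Z_\eta$, $\widehat T_\eta=(1-\gamma_\eta)q_\eta$;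 at index $n_\xi$, with $p_\eta=\frac12(Z_\eta v_\eta-T_\eta)$, $\widehat v_\eta=(1+\gamma_\eta)p_\eta/Z_\eta$, $\widehat T_\eta=-(1-\gamma_\eta)p_\eta$. Penalties: $G_\eta=\frac12Z_\eta(v_\eta-\widehat v_\eta)-\frac12(T_\eta-\widehat T_\eta)$ at index $0$, $G_\eta=\frac12Z_\eta(v_\eta-\widehat v_\eta)+\frac12(T_\eta-\widehat T_\eta)$ at index $n_\xi$; $\widetilde G_\eta=G_\eta/Z_\eta$; and $\mathbf{G}=(G_x,G_y,G_z)^T=\mathbf{R}^T(G_n,G_m,G_l)^T$, $\widetilde{\mathbf{G}}=(\widetilde G_x,\widetilde G_y,\widetilde G_z)^T=\mathbf{R}^T(\widetilde G_n,\widetilde G_m,\widetilde G_l)^T$. *)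

theory Defs
  imports "HOL-Analysis.Analysis"
begin

text \<open>Components of the unknown:
  0,1,2 = v_x,v_y,v_z ; 3..8 = sigma_xx, sigma_yy, sigma_zz, sigma_xy, sigma_xz, sigma_yz.
  Spatial components x,y,z are indexed 0,1,2; rotated components n,m,l are indexed 0,1,2.\<close>

type_synonym pt = "nat \<times> nat \<times> nat"

datatype dir = Dq | Dr | Ds

fun coord :: "dir \<Rightarrow> pt \<Rightarrow> nat" where
  "coord Dq (i,j,k) = i" | "coord Dr (i,j,k) = j" | "coord Ds (i,j,k) = k"

fun setc :: "dir \<Rightarrow> pt \<Rightarrow> nat \<Rightarrow> pt" where
  "setc Dq (i,j,k) a = (a,j,k)" | "setc Dr (i,j,k) a = (i,a,k)" | "setc Ds (i,j,k) a = (i,j,a)"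

definition sumdir :: "(dir \<Rightarrow> real) \<Rightarrow> real" where
  "sumdir g = g Dq + g Dr + g Ds"

record setting =
  nn  :: "dir \<Rightarrow> nat"
  hh  :: "dir \<Rightarrow> nat \<Rightarrow> real"               (* diagonal entries of H_xi *)
  Dp  :: "dir \<Rightarrow> nat \<Rightarrow> nat \<Rightarrow> real"
  Dm  :: "dir \<Rightarrow> nat \<Rightarrow> nat \<Rightarrow> real"
  Jac :: "pt \<Rightarrow> real"
  met :: "dir \<Rightarrow> pt \<Rightarrow> nat \<Rightarrow> real"
  rho :: "pt \<Rightarrow> real"
  Sc  :: "pt \<Rightarrow> nat \<Rightarrow> nat \<Rightarrow> real"         (* 6x6 compliance matrix *)
  Zi  :: "dir \<Rightarrow> nat \<Rightarrow> pt \<Rightarrow> nat \<Rightarrow> real"  (* impedance Z_eta at face (xi,a), point *)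
  gam :: "dir \<Rightarrow> nat \<Rightarrow> pt \<Rightarrow> nat \<Rightarrow> real"
  mfr :: "dir \<Rightarrow> nat \<Rightarrow> pt \<Rightarrow> nat \<Rightarrow> real"
  lfr :: "dir \<Rightarrow> nat \<Rightarrow> pt \<Rightarrow> nat \<Rightarrow> real"

definition grid :: "setting \<Rightarrow> pt set" where
  "grid S = {p. \<forall>d. coord d p \<le> nn S d}"

definition matv :: "(nat \<Rightarrow> nat \<Rightarrow> real) \<Rightarrow> nat \<Rightarrow> (nat \<Rightarrow> real) \<Rightarrow> nat \<Rightarrow> real" where
  "matv M N f i = (\<Sum>i'\<le>N. M i i' * f i')"

definition applyD :: "setting \<Rightarrow> (nat \<Rightarrow> nat \<Rightarrow> real) \<Rightarrow> dir \<Rightarrow> (pt \<Rightarrow> real) \<Rightarrow> pt \<Rightarrow> real" where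
  "applyD S M d f p = (\<Sum>i'\<le>nn S d. M (coord d p) i' * f (setc d p i'))"

definition hprod :: "setting \<Rightarrow> pt \<Rightarrow> real" where
  "hprod S p = hh S Dq (coord Dq p) * hh S Dr (coord Dr p) * hh S Ds (coord Ds p)"

fun hother :: "setting \<Rightarrow> dir \<Rightarrow> pt \<Rightarrow> real" where
  "hother S Dq p = hh S Dr (coord Dr p) * hh S Ds (coord Ds p)"
| "hother S Dr p = hh S Dq (coord Dq p) * hh S Ds (coord Ds p)"
| "hother S Ds p = hh S Dq (coord Dq p) * hh S Dr (coord Dr p)"

definition mnorm :: "setting \<Rightarrow> dir \<Rightarrow> pt \<Rightarrow> real" where
  "mnorm S d p = sqrt (\<Sum>c<3. (met S d p c)\<^sup>2)"

definition face_int :: "setting \<Rightarrow> dir \<Rightarrow> nat \<Rightarrow> (pt \<Rightarrow> real) \<Rightarrow> real" where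
  "face_int S d a f = (\<Sum>p\<in>{p\<in>grid S. coord d p = a}. hother S d p * Jac S p * mnorm S d p * f p)"

definition smat :: "(pt \<Rightarrow> nat \<Rightarrow> real) \<Rightarrow> pt \<Rightarrow> nat \<Rightarrow> nat \<Rightarrow> real" where
  "smat Q p a b =
     (if a = b then Q p (3 + a)
      else if {a,b} = {0,1} then Q p 6
      else if {a,b} = {0,2} then Q p 7
      else Q p 8)"

definition nvec :: "setting \<Rightarrow> dir \<Rightarrow> pt \<Rightarrow> nat \<Rightarrow> real" where
  "nvec S d p c = met S d p c / mnorm S d p"

definition frame :: "setting \<Rightarrow> dir \<Rightarrow> nat \<Rightarrow> pt \<Rightarrow> nat \<Rightarrow> nat \<Rightarrow> real" where
  "frame S d a p \<eta> c = (if \<eta> = 0 then nvec S d p c else if \<eta> = 1 then mfr S d a p c else lfr S d a p c)"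

definition tvec :: "setting \<Rightarrow> (pt \<Rightarrow> nat \<Rightarrow> real) \<Rightarrow> dir \<Rightarrow> pt \<Rightarrow> nat \<Rightarrow> real" where
  "tvec S Q d p c = (\<Sum>b<3. smat Q p c b * nvec S d p b)"

definition vrot :: "setting \<Rightarrow> (pt \<Rightarrow> nat \<Rightarrow> real) \<Rightarrow> dir \<Rightarrow> nat \<Rightarrow> pt \<Rightarrow> nat \<Rightarrow> real" where
  "vrot S Q d a p \<eta> = (\<Sum>c<3. frame S d a p \<eta> c * Q p c)"

definition trot :: "setting \<Rightarrow> (pt \<Rightarrow> nat \<Rightarrow> real) \<Rightarrow> dir \<Rightarrow> nat \<Rightarrow> pt \<Rightarrow> nat \<Rightarrow> real" where
  "trot S Q d a p \<eta> = (\<Sum>c<3. frame S d a p \<eta> c * tvec S Q d p c)"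

text \<open>Characteristic q_eta (at index 0) resp. p_eta (at index n_xi).\<close>
definition charv :: "setting \<Rightarrow> (pt \<Rightarrow> nat \<Rightarrow> real) \<Rightarrow> dir \<Rightarrow> nat \<Rightarrow> pt \<Rightarrow> nat \<Rightarrow> real" where
  "charv S Q d a p \<eta> =
     (if a = 0 then (Zi S d a p \<eta> * vrot S Q d a p \<eta> + trot S Q d a p \<eta>) / 2
      else (Zi S d a p \<eta> * vrot S Q d a p \<eta> - trot S Q d a p \<eta>) / 2)"

definition vhat :: "setting \<Rightarrow> (pt \<Rightarrow> nat \<Rightarrow> real) \<Rightarrow> dir \<Rightarrow> nat \<Rightarrow> pt \<Rightarrow> nat \<Rightarrow> real" where
  "vhat S Q d a p \<eta> = (1 + gam S d a p \<eta>) * charv S Q d a p \<eta> / Zi S d a p \<eta>"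

definition That :: "setting \<Rightarrow> (pt \<Rightarrow> nat \<Rightarrow> real) \<Rightarrow> dir \<Rightarrow> nat \<Rightarrow> pt \<Rightarrow> nat \<Rightarrow> real" where
  "That S Q d a p \<eta> =
     (if a = 0 then (1 - gam S d a p \<eta>) * charv S Q d a p \<eta>
      else - ((1 - gam S d a p \<eta>) * charv S Q d a p \<eta>))"

definition Gpen :: "setting \<Rightarrow> (pt \<Rightarrow> nat \<Rightarrow> real) \<Rightarrow> dir \<Rightarrow> nat \<Rightarrow> pt \<Rightarrow> nat \<Rightarrow> real" where
  "Gpen S Q d a p \<eta> =
     (if a = 0 then Zi S d a p \<eta> * (vrot S Q d a p \<eta> - vhat S Q d a p \<eta>) / 2
                    - (trot S Q d a p \<eta> - That S Q d a p \<eta>) / 2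
      else Zi S d a p \<eta> * (vrot S Q d a p \<eta> - vhat S Q d a p \<eta>) / 2
                    + (trot S Q d a p \<eta> - That S Q d a p \<eta>) / 2)"

definition Gtil :: "setting \<Rightarrow> (pt \<Rightarrow> nat \<Rightarrow> real) \<Rightarrow> dir \<Rightarrow> nat \<Rightarrow> pt \<Rightarrow> nat \<Rightarrow> real" where
  "Gtil S Q d a p \<eta> = Gpen S Q d a p \<eta> / Zi S d a p \<eta>"

definition Gcart :: "setting \<Rightarrow> (pt \<Rightarrow> nat \<Rightarrow> real) \<Rightarrow> dir \<Rightarrow> nat \<Rightarrow> pt \<Rightarrow> nat \<Rightarrow> real" where
  "Gcart S Q d a p c = (\<Sum>\<eta><3. frame S d a p \<eta> c * Gpen S Q d a p \<eta>)"

definition Gtcart :: "setting \<Rightarrow> (pt \<Rightarrow> nat \<Rightarrow> real) \<Rightarrow> dir \<Rightarrow> nat \<Rightarrow> pt \<Rightarrow> nat \<Rightarrow> real" where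
  "Gtcart S Q d a p c = (\<Sum>\<eta><3. frame S d a p \<eta> c * Gtil S Q d a p \<eta>)"

definition svec :: "setting \<Rightarrow> (pt \<Rightarrow> nat \<Rightarrow> real) \<Rightarrow> dir \<Rightarrow> nat \<Rightarrow> pt \<Rightarrow> nat \<Rightarrow> real" where
  "svec S Q d a p c =
     (let sg = (if a = 0 then -1 else 1 :: real);
          n = nvec S d p; G = Gcart S Q d a p; Gt = Gtcart S Q d a p in
      if c < 3 then G c
      else if c = 3 then sg * (n 0 * Gt 0)
      else if c = 4 then sg * (n 1 * Gt 1)
      else if c = 5 then sg * (n 2 * Gt 2)
      else if c = 6 then sg * (n 1 * Gt 0 + n 0 * Gt 1)
      else if c = 7 then sg * (n 2 * Gt 0 + n 0 * Gt 2)
      else if c = 8 then sg * (n 2 * Gt 1 + n 1 * Gt 2)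
      else 0)"

definition sat :: "setting \<Rightarrow> (pt \<Rightarrow> nat \<Rightarrow> real) \<Rightarrow> dir \<Rightarrow> nat \<Rightarrow> pt \<Rightarrow> nat \<Rightarrow> real" where
  "sat S Q d a p c =
     (if coord d p = a then - (1 / hh S d a) * Jac S p * mnorm S d p * svec S Q d a p c else 0)"

definition flux :: "setting \<Rightarrow> (pt \<Rightarrow> nat \<Rightarrow> real) \<Rightarrow> dir \<Rightarrow> pt \<Rightarrow> nat \<Rightarrow> real" where
  "flux S Q d p c = (if c < 3 then Jac S p * (\<Sum>b<3. met S d p b * smat Q p c b) else 0)"

definition Bterm :: "setting \<Rightarrow> (pt \<Rightarrow> nat \<Rightarrow> real) \<Rightarrow> dir \<Rightarrow> pt \<Rightarrow> nat \<Rightarrow> real" where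
  "Bterm S Q d p c =
     (let w = (\<lambda>\<alpha>. applyD S (Dp S d) d (\<lambda>q. Q q \<alpha>) p); x = met S d p; J = Jac S p in
      if c = 3 then J * x 0 * w 0
      else if c = 4 then J * x 1 * w 1
      else if c = 5 then J * x 2 * w 2
      else if c = 6 then J * (x 1 * w 0 + x 0 * w 1)
      else if c = 7 then J * (x 2 * w 0 + x 0 * w 2)
      else if c = 8 then J * (x 2 * w 1 + x 1 * w 2)
      else 0)"

definition rhs :: "setting \<Rightarrow> (pt \<Rightarrow> nat \<Rightarrow> real) \<Rightarrow> pt \<Rightarrow> nat \<Rightarrow> real" where
  "rhs S Q p c = sumdir (\<lambda>d.
      applyD S (Dm S d) d (\<lambda>q. flux S Q d q c) p + Bterm S Q d p c
      + sat S Q d 0 p c + sat S Q d (nn S d) p c)"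

text \<open>Application of P-tilde^{-1} = J diag(rho I_3, S) at a grid point.\<close>
definition pinv :: "setting \<Rightarrow> pt \<Rightarrow> (nat \<Rightarrow> real) \<Rightarrow> nat \<Rightarrow> real" where
  "pinv S p X c =
     (if c < 3 then Jac S p * rho S p * X c
      else if c < 9 then Jac S p * (\<Sum>b<6. Sc S p (c - 3) b * X (3 + b))
      else 0)"

definition energy :: "setting \<Rightarrow> (pt \<Rightarrow> nat \<Rightarrow> real) \<Rightarrow> real" where
  "energy S Q = (1/2) * (\<Sum>p\<in>grid S. hprod S p * (\<Sum>c<9. Q p c * pinv S p (Q p) c))"

definition Fluc :: "setting \<Rightarrow> (pt \<Rightarrow> nat \<Rightarrow> real) \<Rightarrow> real" where
  "Fluc S Q = - sumdir (\<lambda>d. \<Sum>a\<in>{0, nn S d}.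
      face_int S d a (\<lambda>p. \<Sum>\<eta><3. (Gpen S Q d a p \<eta>)\<^sup>2 / Zi S d a p \<eta>))"

definition bdry :: "setting \<Rightarrow> (pt \<Rightarrow> nat \<Rightarrow> real) \<Rightarrow> real" where
  "bdry S Q = sumdir (\<lambda>d.
      face_int S d (nn S d) (\<lambda>p. \<Sum>\<eta><3. vhat S Q d (nn S d) p \<eta> * That S Q d (nn S d) p \<eta>)
    - face_int S d 0 (\<lambda>p. \<Sum>\<eta><3. vhat S Q d 0 p \<eta> * That S Q d 0 p \<eta>))"

definition admissible :: "setting \<Rightarrow> bool" where
  "admissible S \<longleftrightarrow>
     (\<forall>d. 1 \<le> nn S d) \<and>
     (\<forall>d i. i \<le> nn S d \<longrightarrow> hh S d i > 0) \<and>
     (\<forall>d f g. (\<Sum>i\<le>nn S d. matv (Dp S d) (nn S d) f i * hh S d i * g i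
                          + f i * hh S d i * matv (Dm S d) (nn S d) g i)
              = f (nn S d) * g (nn S d) - f 0 * g 0) \<and>
     (\<forall>p\<in>grid S. Jac S p > 0 \<and> rho S p > 0 \<and> (\<forall>d. \<exists>c<3. met S d p c \<noteq> 0) \<and>
        (\<forall>a<6. \<forall>b<6. Sc S p a b = Sc S p b a) \<and>
        (\<forall>x. (\<exists>a<6. x a \<noteq> 0) \<longrightarrow> (\<Sum>a<6. \<Sum>b<6. x a * Sc S p a b * x b) > 0)) \<and>
     (\<forall>d a p. a \<in> {0, nn S d} \<and> p \<in> grid S \<and> coord d p = a \<longrightarrow>
        (\<forall>\<eta><3. Zi S d a p \<eta> > 0 \<and> -1 \<le> gam S d a p \<eta> \<and> gam S d a p \<eta> \<le> 1) \<and>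
        (\<forall>\<eta><3. \<forall>\<eta>'<3. (\<Sum>c<3. frame S d a p \<eta> c * frame S d a p \<eta>' c)
                          = (if \<eta> = \<eta>' then 1 else 0)))"

end

theory Submission
  imports Defs "Jordan_Normal_Form.Determinant"
begin

lemma orth3:
  fixes R :: "nat \<Rightarrow> nat \<Rightarrow> real"
  assumes "\<forall>\<eta><3. \<forall>\<eta>'<3. (\<Sum>c<3. R \<eta> c * R \<eta>' c) = (if \<eta> = \<eta>' then 1 else 0)"
  shows "(\<Sum>c<3. u c * w c) = (\<Sum>\<eta><3. (\<Sum>c<3. R \<eta> c * u c) * (\<Sum>c<3. R \<eta> c * w c))"
proof -
  define A :: "real Matrix.mat" where "A = Matrix.mat 3 3 (\<lambda>(i,j). R i j)"
  define B :: "real Matrix.mat" where "B = Matrix.mat 3 3 (\<lambda>(i,j). R j i)"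
  have Ac: "A \<in> carrier_mat 3 3" and Bc: "B \<in> carrier_mat 3 3" by (auto simp: A_def B_def)
  have sl: "\<And>f. (\<Sum>i\<in>{0..<3::nat}. f i) = (\<Sum>i<3. f i)" by (simp add: atLeast0LessThan)
  have "A * B = 1\<^sub>m 3"
    by (rule eq_matI) (use assms in \<open>auto simp: A_def B_def scalar_prod_def sl\<close>)
  hence BA: "B * A = 1\<^sub>m 3" using mat_mult_left_right_inverse[OF Ac Bc] by blast
  have col: "\<And>c c'. c < 3 \<Longrightarrow> c' < 3 \<Longrightarrow> (\<Sum>\<eta><3. R \<eta> c * R \<eta> c') = (if c = c' then 1 else 0)"
  proof -
    fix c c' :: nat assume "c < 3" "c' < 3"
    hence "(B * A) $$ (c, c') = (1\<^sub>m 3 :: real Matrix.mat) $$ (c, c')" using BA by simp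
    thus "(\<Sum>\<eta><3. R \<eta> c * R \<eta> c') = (if c = c' then 1 else 0)"
      using \<open>c<3\<close> \<open>c'<3\<close> by (simp add: A_def B_def scalar_prod_def sl)
  qed
  have "(\<Sum>\<eta><3. (\<Sum>c<3. R \<eta> c * u c) * (\<Sum>c<3. R \<eta> c * w c))
      = (\<Sum>c<3. \<Sum>c'<3. u c * w c' * (\<Sum>\<eta><3. R \<eta> c * R \<eta> c'))"
    by (simp add: sum_distrib_left sum_distrib_right algebra_simps) (simp add: numeral_3_eq_3 lessThan_Suc algebra_simps)
  also have "\<dots> = (\<Sum>c<3. u c * w c)"
  proof (rule sum.cong[OF refl])
    fix c assume c: "c \<in> {..<3::nat}"
    have "(\<Sum>c'<3. u c * w c' * (\<Sum>\<eta><3. R \<eta> c * R \<eta> c')) = (\<Sum>c'<3. if c' = c then u c * w c else 0)"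
      by (rule sum.cong[OF refl]) (use c in \<open>auto simp: col\<close>)
    also have "\<dots> = u c * w c" using c by simp
    finally show "(\<Sum>c'<3. u c * w c' * (\<Sum>\<eta><3. R \<eta> c * R \<eta> c')) = u c * w c" .
  qed
  finally show ?thesis by simp
qed


lemma all_dir: "(\<forall>d. P d) = (P Dq \<and> P Dr \<and> P Ds)"
  by (metis dir.exhaust)

lemma coord_setc[simp]: "coord d (setc d p i) = i"
  by (cases d; cases p) auto
lemma coord_setc_other: "d' \<noteq> d \<Longrightarrow> coord d' (setc d p i) = coord d' p"
  by (cases d; cases d'; cases p) auto
lemma setc_setc[simp]: "setc d (setc d p i) j = setc d p j"
  by (cases d; cases p) auto
lemma setc_coord[simp]: "setc d p (coord d p) = p"
  by (cases d; cases p) auto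
lemma hother_setc[simp]: "hother S d (setc d p i) = hother S d p"
  by (cases d; cases p) auto
lemma hprod_split: "hprod S p = hh S d (coord d p) * hother S d p"
  by (cases d; cases p) (auto simp: hprod_def)

lemma setc_grid: "p \<in> grid S \<Longrightarrow> i \<le> nn S d \<Longrightarrow> setc d p i \<in> grid S"
  by (cases d; cases p) (auto simp: grid_def all_dir)

lemma grid_coord: "p \<in> grid S \<Longrightarrow> coord d p \<le> nn S d"
  by (auto simp: grid_def)

lemma finite_grid: "finite (grid S)"
proof -
  have "grid S \<subseteq> {..nn S Dq} \<times> {..nn S Dr} \<times> {..nn S Ds}"
    by (auto simp: grid_def all_dir)
  thus ?thesis by (rule finite_subset) auto
qed

lemma grid_split:
  assumes "a \<le> nn S d"
  shows "(\<Sum>p\<in>grid S. f p) = (\<Sum>p\<in>{p\<in>grid S. coord d p = a}. \<Sum>i\<le>nn S d. f (setc d p i))"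
proof -
  have "(\<Sum>p\<in>{p\<in>grid S. coord d p = a}. \<Sum>i\<le>nn S d. f (setc d p i))
      = (\<Sum>(p,i)\<in>{p\<in>grid S. coord d p = a} \<times> {..nn S d}. f (setc d p i))"
    by (rule sum.cartesian_product)
  also have "\<dots> = (\<Sum>p\<in>grid S. f p)"
    by (rule sum.reindex_bij_witness[where i = "\<lambda>q. (setc d q a, coord d q)" and j = "\<lambda>(p,i). setc d p i"])
       (use assms in \<open>auto intro: setc_grid grid_coord\<close>)
  finally show ?thesis by simp
qed

lemma face_reindex:
  assumes "a \<le> nn S d" "b \<le> nn S d"
  shows "(\<Sum>p\<in>{p\<in>grid S. coord d p = a}. f (setc d p b)) = (\<Sum>p\<in>{p\<in>grid S. coord d p = b}. f p)"
proof (rule sum.reindex_bij_witness[where i = "\<lambda>q. setc d q a" and j = "\<lambda>p. setc d p b"])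
  fix p assume p: "p \<in> {p\<in>grid S. coord d p = a}"
  thus "setc d (setc d p b) a = p" by auto
  show "setc d p b \<in> {p\<in>grid S. coord d p = b}" using p assms by (auto intro: setc_grid)
next
  fix q assume q: "q \<in> {p\<in>grid S. coord d p = b}"
  thus "setc d (setc d q a) b = q" by auto
  show "setc d q a \<in> {p\<in>grid S. coord d p = a}" using q assms by (auto intro: setc_grid)
qed simp

lemma applyD_setc: "applyD S M d g (setc d p i) = matv M (nn S d) (\<lambda>i'. g (setc d p i')) i"
  by (simp add: applyD_def matv_def)

lemma sbp3:
  assumes adm: "admissible S"
  shows "(\<Sum>p\<in>grid S. hprod S p * (f p * applyD S (Dm S d) d g p + g p * applyD S (Dp S d) d f p))
   = (\<Sum>p\<in>{p\<in>grid S. coord d p = nn S d}. hother S d p * (f p * g p))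
     - (\<Sum>p\<in>{p\<in>grid S. coord d p = 0}. hother S d p * (f p * g p))"
proof -
  let ?n = "nn S d"
  have sbp: "\<And>f g. (\<Sum>i\<le>?n. matv (Dp S d) ?n f i * hh S d i * g i + f i * hh S d i * matv (Dm S d) ?n g i)
              = f ?n * g ?n - f 0 * g 0"
    using adm unfolding admissible_def by blast
  have "(\<Sum>p\<in>grid S. hprod S p * (f p * applyD S (Dm S d) d g p + g p * applyD S (Dp S d) d f p))
     = (\<Sum>p\<in>{p\<in>grid S. coord d p = 0}. \<Sum>i\<le>?n. hprod S (setc d p i) * (f (setc d p i) * applyD S (Dm S d) d g (setc d p i) + g (setc d p i) * applyD S (Dp S d) d f (setc d p i)))"
    by (rule grid_split) simp
  also have "\<dots> = (\<Sum>p\<in>{p\<in>grid S. coord d p = 0}. hother S d p *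
        (\<Sum>i\<le>?n. matv (Dp S d) ?n (\<lambda>i. f (setc d p i)) i * hh S d i * g (setc d p i) + f (setc d p i) * hh S d i * matv (Dm S d) ?n (\<lambda>i. g (setc d p i)) i))"
    by (rule sum.cong[OF refl]) (simp add: sum_distrib_left applyD_setc hprod_split[of S _ d] algebra_simps)
  also have "\<dots> = (\<Sum>p\<in>{p\<in>grid S. coord d p = 0}. hother S d p * (f (setc d p ?n) * g (setc d p ?n))
                   - hother S d p * (f p * g p))"
  proof (rule sum.cong[OF refl])
    fix p assume p: "p \<in> {p\<in>grid S. coord d p = 0}"
    have "setc d p 0 = p" using p setc_coord[of d p] by simp
    moreover note sbp[of "\<lambda>i. f (setc d p i)" "\<lambda>i. g (setc d p i)"]
    ultimately show "hother S d p *
        (\<Sum>i\<le>?n. matv (Dp S d) ?n (\<lambda>i. f (setc d p i)) i * hh S d i * g (setc d p i) + f (setc d p i) * hh S d i * matv (Dm S d) ?n (\<lambda>i. g (setc d p i)) i)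
       = hother S d p * (f (setc d p ?n) * g (setc d p ?n)) - hother S d p * (f p * g p)"
      by (simp add: right_diff_distrib)
  qed
  also have "\<dots> = (\<Sum>p\<in>{p\<in>grid S. coord d p = 0}. hother S d (setc d p ?n) * (f (setc d p ?n) * g (setc d p ?n)))
                   - (\<Sum>p\<in>{p\<in>grid S. coord d p = 0}. hother S d p * (f p * g p))"
    by (simp add: sum_subtractf)
  also have "(\<Sum>p\<in>{p\<in>grid S. coord d p = 0}. hother S d (setc d p ?n) * (f (setc d p ?n) * g (setc d p ?n)))
     = (\<Sum>p\<in>{p\<in>grid S. coord d p = ?n}. hother S d p * (f p * g p))"
    by (rule face_reindex[where f = "\<lambda>p. hother S d p * (f p * g p)"]) auto
  finally show ?thesis .
qed

lemma applyD_zero[simp]: "applyD S M d (\<lambda>q. 0) p = 0"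
  by (simp add: applyD_def)

lemma s3: "(\<Sum>c<(3::nat). f c) = f 0 + f 1 + (f 2::real)"
  by (simp add: eval_nat_numeral)
lemma s6: "(\<Sum>c<(6::nat). f c) = f 0 + f 1 + f 2 + f 3 + f 4 + (f 5::real)"
  by (simp add: eval_nat_numeral)
lemma s9: "(\<Sum>c<(9::nat). f c) = f 0 + f 1 + f 2 + f 3 + f 4 + f 5 + f 6 + f 7 + (f 8::real)"
  by (simp add: eval_nat_numeral)

lemma smat_vals[simp]:
  "smat Q p 0 0 = Q p 3"
  "smat Q p (Suc 0) (Suc 0) = Q p 4"
  "smat Q p 2 2 = Q p 5"
  "smat Q p 0 (Suc 0) = Q p 6"
  "smat Q p (Suc 0) 0 = Q p 6"
  "smat Q p 0 2 = Q p 7"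
  "smat Q p 2 0 = Q p 7"
  "smat Q p (Suc 0) 2 = Q p 8"
  "smat Q p 2 (Suc 0) = Q p 8"
  "smat Q p 1 1 = Q p 4"
  "smat Q p 0 1 = Q p 6"
  "smat Q p 1 0 = Q p 6"
  "smat Q p 1 2 = Q p 8"
  "smat Q p 2 1 = Q p 8"
  unfolding smat_def by (simp_all add: doubleton_eq_iff)

lemma vol_pt:
  "(\<Sum>c<9. Q p c * (applyD S (Dm S d) d (\<lambda>q. flux S Q d q c) p + Bterm S Q d p c))
   = (\<Sum>\<alpha><3. Q p \<alpha> * applyD S (Dm S d) d (\<lambda>q. flux S Q d q \<alpha>) p + flux S Q d p \<alpha> * applyD S (Dp S d) d (\<lambda>q. Q q \<alpha>) p)"
  by (simp add: s9 s3 flux_def Bterm_def Let_def algebra_simps)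

lemma flux_dot:
  assumes "mnorm S d p \<noteq> 0"
  shows "(\<Sum>\<alpha><3. Q p \<alpha> * flux S Q d p \<alpha>) = Jac S p * mnorm S d p * (\<Sum>\<alpha><3. Q p \<alpha> * tvec S Q d p \<alpha>)"
  using assms by (simp add: s3 flux_def tvec_def nvec_def field_simps)

lemma svec_dot:
  "(\<Sum>c<9. Q p c * svec S Q d a p c) = (\<Sum>\<alpha><3. Q p \<alpha> * Gcart S Q d a p \<alpha>)
     + (if a = 0 then -1 else 1) * (\<Sum>\<alpha><3. Gtcart S Q d a p \<alpha> * tvec S Q d p \<alpha>)"
  by (simp add: s9 s3 svec_def tvec_def Let_def algebra_simps)

lemma G_dot: "(\<Sum>\<alpha><3. Q p \<alpha> * Gcart S Q d a p \<alpha>) = (\<Sum>\<eta><3. Gpen S Q d a p \<eta> * vrot S Q d a p \<eta>)"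
  by (simp add: s3 Gcart_def vrot_def algebra_simps)

lemma Gt_dot: "(\<Sum>\<alpha><3. Gtcart S Q d a p \<alpha> * tvec S Q d p \<alpha>) = (\<Sum>\<eta><3. Gtil S Q d a p \<eta> * trot S Q d a p \<eta>)"
  by (simp add: s3 Gtcart_def trot_def algebra_simps)

lemma vT_dot:
  assumes "\<forall>\<eta><3. \<forall>\<eta>'<3. (\<Sum>c<3. frame S d a p \<eta> c * frame S d a p \<eta>' c) = (if \<eta> = \<eta>' then 1 else 0)"
  shows "(\<Sum>\<alpha><3. Q p \<alpha> * tvec S Q d p \<alpha>) = (\<Sum>\<eta><3. vrot S Q d a p \<eta> * trot S Q d a p \<eta>)"
  unfolding vrot_def trot_def by (rule orth3[OF assms])

lemma id_n:
  fixes vv T Z g p G vh Th :: real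
  assumes Z: "Z > 0" and p: "p = (Z * vv - T)/2" and vh: "vh = (1+g) * p/Z" and Th: "Th = -((1-g) * p)"
    and G: "G = Z * (vv - vh)/2 + (T - Th)/2"
  shows "vv * T - (G * vv + G/Z * T) = vh * Th - G^2/Z"
proof -
  have vv: "vv = (2 * p + T)/Z" using p Z by (simp add: field_simps)
  have zv: "Z * vv = 2 * p + T" using p by simp
  have zvh: "Z * vh = (1+g) * p" using Z vh by simp
  have "G = (Z * vv - Z * vh)/2 + (T - Th)/2" using G by (simp add: right_diff_distrib)
  hence G': "G = (1-g) * p + T" unfolding zv zvh Th by (simp add: field_simps)
  show ?thesis unfolding vv G' vh Th using Z by (simp add: field_simps power2_eq_square; simp add: algebra_simps)
qed
lemma id_0:
  fixes vv T Z g p G vh Th :: real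
  assumes Z: "Z > 0" and p: "p = (Z * vv + T)/2" and vh: "vh = (1+g) * p/Z" and Th: "Th = (1-g) * p"
    and G: "G = Z * (vv - vh)/2 - (T - Th)/2"
  shows "- (vv * T) - (G * vv - G/Z * T) = - (vh * Th + G^2/Z)"
proof -
  have vv: "vv = (2 * p - T)/Z" using p Z by (simp add: field_simps)
  have zv: "Z * vv = 2 * p - T" using p by simp
  have zvh: "Z * vh = (1+g) * p" using Z vh by simp
  have "G = (Z * vv - Z * vh)/2 - (T - Th)/2" using G by (simp add: right_diff_distrib)
  hence G': "G = (1-g) * p - T" unfolding zv zvh Th by (simp add: field_simps)
  show ?thesis unfolding vv G' vh Th using Z by (simp add: field_simps power2_eq_square; simp add: algebra_simps)
qed
lemma face_n_pt:
  assumes "a \<noteq> 0" "Zi S d a p \<eta> > 0"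
  shows "vrot S Q d a p \<eta> * trot S Q d a p \<eta> - (Gpen S Q d a p \<eta> * vrot S Q d a p \<eta> + Gtil S Q d a p \<eta> * trot S Q d a p \<eta>)
     = vhat S Q d a p \<eta> * That S Q d a p \<eta> - (Gpen S Q d a p \<eta>)\<^sup>2 / Zi S d a p \<eta>"
  unfolding Gtil_def
  by (rule id_n[OF assms(2), where p = "charv S Q d a p \<eta>" and g = "gam S d a p \<eta>"]) (use assms(1) in \<open>simp_all add: Gpen_def vhat_def That_def charv_def\<close>)

lemma face_0_pt:
  assumes "Zi S d 0 p \<eta> > 0"
  shows "- (vrot S Q d 0 p \<eta> * trot S Q d 0 p \<eta>) - (Gpen S Q d 0 p \<eta> * vrot S Q d 0 p \<eta> - Gtil S Q d 0 p \<eta> * trot S Q d 0 p \<eta>)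
     = - (vhat S Q d 0 p \<eta> * That S Q d 0 p \<eta> + (Gpen S Q d 0 p \<eta>)\<^sup>2 / Zi S d 0 p \<eta>)"
  unfolding Gtil_def
  by (rule id_0[OF assms(1), where p = "charv S Q d 0 p \<eta>" and g = "gam S d 0 p \<eta>"]) (simp_all add: Gpen_def vhat_def That_def charv_def)

lemma face_n_sign:
  assumes "a \<noteq> 0" "Zi S d a p \<eta> > 0" "-1 \<le> gam S d a p \<eta>" "gam S d a p \<eta> \<le> 1"
  shows "vhat S Q d a p \<eta> * That S Q d a p \<eta> \<le> 0"
proof -
  have "vhat S Q d a p \<eta> * That S Q d a p \<eta> = - (((1 + gam S d a p \<eta>) * (1 - gam S d a p \<eta>)) * (charv S Q d a p \<eta>)\<^sup>2 / Zi S d a p \<eta>)"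
    using assms by (simp add: vhat_def That_def power2_eq_square)
  moreover have "0 \<le> ((1 + gam S d a p \<eta>) * (1 - gam S d a p \<eta>)) * (charv S Q d a p \<eta>)\<^sup>2 / Zi S d a p \<eta>"
    using assms by (intro divide_nonneg_pos mult_nonneg_nonneg) auto
  ultimately show ?thesis by linarith
qed

lemma face_0_sign:
  assumes "Zi S d 0 p \<eta> > 0" "-1 \<le> gam S d 0 p \<eta>" "gam S d 0 p \<eta> \<le> 1"
  shows "vhat S Q d 0 p \<eta> * That S Q d 0 p \<eta> \<ge> 0"
proof -
  have "vhat S Q d 0 p \<eta> * That S Q d 0 p \<eta> = ((1 + gam S d 0 p \<eta>) * (1 - gam S d 0 p \<eta>)) * (charv S Q d 0 p \<eta>)\<^sup>2 / Zi S d 0 p \<eta>"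
    using assms by (simp add: vhat_def That_def power2_eq_square)
  moreover have "0 \<le> ((1 + gam S d 0 p \<eta>) * (1 - gam S d 0 p \<eta>)) * (charv S Q d 0 p \<eta>)\<^sup>2 / Zi S d 0 p \<eta>"
    using assms by (intro divide_nonneg_pos mult_nonneg_nonneg) auto
  ultimately show ?thesis by linarith
qed

lemma adm_p1:
  assumes "admissible S"
  shows "\<forall>d. 1 \<le> nn S d"
  using assms unfolding admissible_def by (elim conjE) assumption

lemma adm_p2:
  assumes "admissible S"
  shows "\<forall>d i. i \<le> nn S d \<longrightarrow> hh S d i > 0"
  using assms unfolding admissible_def by (elim conjE) assumption

lemma adm_p3:
  assumes "admissible S"
  shows "\<forall>d f g. (\<Sum>i\<le>nn S d. matv (Dp S d) (nn S d) f i * hh S d i * g i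
                          + f i * hh S d i * matv (Dm S d) (nn S d) g i)
              = f (nn S d) * g (nn S d) - f 0 * g 0"
  using assms unfolding admissible_def by (elim conjE) assumption

lemma adm_p4:
  assumes "admissible S"
  shows "\<forall>p\<in>grid S. Jac S p > 0 \<and> rho S p > 0 \<and> (\<forall>d. \<exists>c<3. met S d p c \<noteq> 0) \<and>
        (\<forall>a<6. \<forall>b<6. Sc S p a b = Sc S p b a) \<and>
        (\<forall>x. (\<exists>a<6. x a \<noteq> 0) \<longrightarrow> (\<Sum>a<6. \<Sum>b<6. x a * Sc S p a b * x b) > 0)"
  using assms unfolding admissible_def by (elim conjE) assumption

lemma adm_p5:
  assumes "admissible S"
  shows "\<forall>d a p. a \<in> {0, nn S d} \<and> p \<in> grid S \<and> coord d p = a \<longrightarrow>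
        (\<forall>\<eta><3. Zi S d a p \<eta> > 0 \<and> -1 \<le> gam S d a p \<eta> \<and> gam S d a p \<eta> \<le> 1) \<and>
        (\<forall>\<eta><3. \<forall>\<eta>'<3. (\<Sum>c<3. frame S d a p \<eta> c * frame S d a p \<eta>' c)
                          = (if \<eta> = \<eta>' then 1 else 0))"
  using assms unfolding admissible_def by (elim conjE) assumption

lemmas adm_parts = adm_p1 adm_p2 adm_p3 adm_p4 adm_p5

lemma adm_h: "admissible S \<Longrightarrow> i \<le> nn S d \<Longrightarrow> hh S d i > 0"
  using adm_parts(2) by blast
lemma adm_n: "admissible S \<Longrightarrow> nn S d \<noteq> 0"
proof -
  assume "admissible S"
  hence "1 \<le> nn S d" using adm_parts(1) by blast
  thus ?thesis by simp
qed
lemma adm_pt: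
  assumes "admissible S" "p \<in> grid S"
  shows "Jac S p > 0" "rho S p > 0" "\<exists>c<3. met S d p c \<noteq> 0" "\<forall>a<6. \<forall>b<6. Sc S p a b = Sc S p b a"
  using adm_parts(4)[OF assms(1)] assms(2) by blast+
lemma adm_face:
  assumes "admissible S" "a \<in> {0, nn S d}" "p \<in> grid S" "coord d p = a"
  shows "\<forall>\<eta><3. Zi S d a p \<eta> > 0 \<and> -1 \<le> gam S d a p \<eta> \<and> gam S d a p \<eta> \<le> 1"
    "\<forall>\<eta><3. \<forall>\<eta>'<3. (\<Sum>c<3. frame S d a p \<eta> c * frame S d a p \<eta>' c) = (if \<eta> = \<eta>' then 1 else 0)"
proof -
  have "a \<in> {0, nn S d} \<and> p \<in> grid S \<and> coord d p = a" using assms by blast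
  hence "(\<forall>\<eta><3. Zi S d a p \<eta> > 0 \<and> -1 \<le> gam S d a p \<eta> \<and> gam S d a p \<eta> \<le> 1) \<and>
        (\<forall>\<eta><3. \<forall>\<eta>'<3. (\<Sum>c<3. frame S d a p \<eta> c * frame S d a p \<eta>' c)
                          = (if \<eta> = \<eta>' then 1 else 0))"
    using adm_parts(5)[OF assms(1)] by blast
  thus "\<forall>\<eta><3. Zi S d a p \<eta> > 0 \<and> -1 \<le> gam S d a p \<eta> \<and> gam S d a p \<eta> \<le> 1"
    "\<forall>\<eta><3. \<forall>\<eta>'<3. (\<Sum>c<3. frame S d a p \<eta> c * frame S d a p \<eta>' c) = (if \<eta> = \<eta>' then 1 else 0)"
    by blast+
qed

lemma adm_mnorm:
  assumes "admissible S" "p \<in> grid S"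
  shows "mnorm S d p > 0"
proof -
  obtain c where c: "c < 3" "met S d p c \<noteq> 0" using adm_pt(3)[OF assms] by blast
  have "0 < (met S d p c)\<^sup>2" using c by simp
  also have "\<dots> \<le> (\<Sum>c<3. (met S d p c)\<^sup>2)"
    by (rule member_le_sum) (use c in auto)
  finally show ?thesis unfolding mnorm_def by simp
qed

lemma fi_cong:
  "(\<And>p. p \<in> grid S \<Longrightarrow> coord d p = a \<Longrightarrow> f p = g p) \<Longrightarrow> face_int S d a f = face_int S d a g"
  unfolding face_int_def by (rule sum.cong) auto

lemma fi_add: "face_int S d a (\<lambda>p. f p + g p) = face_int S d a f + face_int S d a g"
  unfolding face_int_def by (simp add: distrib_left sum.distrib)
lemma fi_neg: "face_int S d a (\<lambda>p. - f p) = - face_int S d a f"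
  unfolding face_int_def by (simp add: sum_negf)
lemma fi_diff: "face_int S d a (\<lambda>p. f p - g p) = face_int S d a f - face_int S d a g"
  unfolding face_int_def by (simp add: right_diff_distrib sum_subtractf)

lemma hother_pos: "admissible S \<Longrightarrow> p \<in> grid S \<Longrightarrow> hother S d p > 0"
  by (cases d) (auto intro!: mult_pos_pos adm_h grid_coord)

lemma fi_nonneg:
  assumes "admissible S" "\<And>p. p \<in> grid S \<Longrightarrow> coord d p = a \<Longrightarrow> f p \<ge> 0"
  shows "face_int S d a f \<ge> 0"
  unfolding face_int_def
proof (rule sum_nonneg)
  fix p assume p: "p \<in> {p \<in> grid S. coord d p = a}"
  show "0 \<le> hother S d p * Jac S p * mnorm S d p * f p"
  proof -
    have pg: "p \<in> grid S" "coord d p = a" using p by auto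
    have "0 < hother S d p" "0 < Jac S p" "0 < mnorm S d p"
      using hother_pos[OF assms(1) pg(1)] adm_pt(1)[OF assms(1) pg(1)] adm_mnorm[OF assms(1) pg(1)] by auto
    moreover have "0 \<le> f p" using assms(2)[OF pg] .
    ultimately show ?thesis by simp
  qed
qed

lemma fi_nonpos:
  assumes "admissible S" "\<And>p. p \<in> grid S \<Longrightarrow> coord d p = a \<Longrightarrow> f p \<le> 0"
  shows "face_int S d a f \<le> 0"
proof -
  have "face_int S d a (\<lambda>p. - f p) \<ge> 0" by (rule fi_nonneg) (use assms in auto)
  thus ?thesis by (simp add: fi_neg)
qed

lemma vol:
  assumes adm: "admissible S"
  shows "(\<Sum>p\<in>grid S. hprod S p * (\<Sum>c<9. Q p c * (applyD S (Dm S d) d (\<lambda>q. flux S Q d q c) p + Bterm S Q d p c)))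
   = face_int S d (nn S d) (\<lambda>p. \<Sum>\<alpha><3. Q p \<alpha> * tvec S Q d p \<alpha>) - face_int S d 0 (\<lambda>p. \<Sum>\<alpha><3. Q p \<alpha> * tvec S Q d p \<alpha>)"
proof -
  have "(\<Sum>p\<in>grid S. hprod S p * (\<Sum>c<9. Q p c * (applyD S (Dm S d) d (\<lambda>q. flux S Q d q c) p + Bterm S Q d p c)))
     = (\<Sum>p\<in>grid S. \<Sum>\<alpha><3. hprod S p * (Q p \<alpha> * applyD S (Dm S d) d (\<lambda>q. flux S Q d q \<alpha>) p + flux S Q d p \<alpha> * applyD S (Dp S d) d (\<lambda>q. Q q \<alpha>) p))"
    by (simp add: vol_pt sum_distrib_left)
  also have "\<dots> = (\<Sum>\<alpha><3. \<Sum>p\<in>grid S. hprod S p * (Q p \<alpha> * applyD S (Dm S d) d (\<lambda>q. flux S Q d q \<alpha>) p + flux S Q d p \<alpha> * applyD S (Dp S d) d (\<lambda>q. Q q \<alpha>) p))"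
    by (rule sum.swap)
  also have "\<dots> = (\<Sum>\<alpha><3. (\<Sum>p\<in>{p\<in>grid S. coord d p = nn S d}. hother S d p * (Q p \<alpha> * flux S Q d p \<alpha>))
                  - (\<Sum>p\<in>{p\<in>grid S. coord d p = 0}. hother S d p * (Q p \<alpha> * flux S Q d p \<alpha>)))"
    by (rule sum.cong[OF refl], rule sbp3[OF adm])
  also have "\<dots> = (\<Sum>p\<in>{p\<in>grid S. coord d p = nn S d}. hother S d p * (\<Sum>\<alpha><3. Q p \<alpha> * flux S Q d p \<alpha>))
                  - (\<Sum>p\<in>{p\<in>grid S. coord d p = 0}. hother S d p * (\<Sum>\<alpha><3. Q p \<alpha> * flux S Q d p \<alpha>))"
    by (simp add: sum_subtractf sum_distrib_left sum.swap[of _ "{..<3::nat}"])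
  also have "\<dots> = face_int S d (nn S d) (\<lambda>p. \<Sum>\<alpha><3. Q p \<alpha> * tvec S Q d p \<alpha>) - face_int S d 0 (\<lambda>p. \<Sum>\<alpha><3. Q p \<alpha> * tvec S Q d p \<alpha>)"
  proof -
    have pw: "hother S d p * (\<Sum>\<alpha><3. Q p \<alpha> * flux S Q d p \<alpha>) = hother S d p * Jac S p * mnorm S d p * (\<Sum>\<alpha><3. Q p \<alpha> * tvec S Q d p \<alpha>)"
      if "p \<in> grid S" for p
    proof -
      have "mnorm S d p \<noteq> 0" using adm_mnorm[OF adm that, of d] by simp
      thus ?thesis using flux_dot[of S d p Q] by simp
    qed
    have e: "(\<Sum>p\<in>{p\<in>grid S. coord d p = b}. hother S d p * (\<Sum>\<alpha><3. Q p \<alpha> * flux S Q d p \<alpha>))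
       = face_int S d b (\<lambda>p. \<Sum>\<alpha><3. Q p \<alpha> * tvec S Q d p \<alpha>)" for b
      unfolding face_int_def by (rule sum.cong[OF refl]) (simp add: pw)
    show ?thesis by (simp only: e)
  qed
  finally show ?thesis .
qed

lemma satT:
  assumes adm: "admissible S" and a: "a \<le> nn S d"
  shows "(\<Sum>p\<in>grid S. hprod S p * (\<Sum>c<9. Q p c * sat S Q d a p c))
     = - face_int S d a (\<lambda>p. \<Sum>c<9. Q p c * svec S Q d a p c)"
proof -
  have h: "hh S d a > 0" using adm_h[OF adm a] .
  have "(\<Sum>p\<in>grid S. hprod S p * (\<Sum>c<9. Q p c * sat S Q d a p c))
      = (\<Sum>p\<in>grid S. if coord d p = a then - (hother S d p * Jac S p * mnorm S d p * (\<Sum>c<9. Q p c * svec S Q d a p c)) else 0)"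
  proof (rule sum.cong[OF refl])
    fix p assume "p \<in> grid S"
    show "hprod S p * (\<Sum>c<9. Q p c * sat S Q d a p c) = (if coord d p = a then - (hother S d p * Jac S p * mnorm S d p * (\<Sum>c<9. Q p c * svec S Q d a p c)) else 0)"
    proof (cases "coord d p = a")
      case True
      have "hprod S p * (\<Sum>c<9. Q p c * sat S Q d a p c)
          = hh S d a * hother S d p * (- (1 / hh S d a) * Jac S p * mnorm S d p * (\<Sum>c<9. Q p c * svec S Q d a p c))"
        using True by (simp add: hprod_split[of S p d] sat_def sum_distrib_left algebra_simps)
      also have "\<dots> = - (hother S d p * Jac S p * mnorm S d p * (\<Sum>c<9. Q p c * svec S Q d a p c))"
        using h by (simp add: field_simps)
      finally show ?thesis using True by simp
    qed (simp add: sat_def)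
  qed
  also have "\<dots> = - face_int S d a (\<lambda>p. \<Sum>c<9. Q p c * svec S Q d a p c)"
    unfolding face_int_def by (simp add: sum.inter_filter[OF finite_grid] sum_negf[symmetric] if_distrib cong: if_cong)
  finally show ?thesis .
qed

lemma pt_n:
  assumes adm: "admissible S" and p: "p \<in> grid S" "coord d p = nn S d"
  shows "(\<Sum>\<alpha><3. Q p \<alpha> * tvec S Q d p \<alpha>) - (\<Sum>c<9. Q p c * svec S Q d (nn S d) p c)
    = (\<Sum>\<eta><3. vhat S Q d (nn S d) p \<eta> * That S Q d (nn S d) p \<eta> - (Gpen S Q d (nn S d) p \<eta>)\<^sup>2 / Zi S d (nn S d) p \<eta>)"
proof -
  let ?a = "nn S d"
  have n0: "?a \<noteq> 0" using adm_n[OF adm] .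
  have Z: "\<forall>\<eta><3. Zi S d ?a p \<eta> > 0 \<and> -1 \<le> gam S d ?a p \<eta> \<and> gam S d ?a p \<eta> \<le> 1"
   and O: "\<forall>\<eta><3. \<forall>\<eta>'<3. (\<Sum>c<3. frame S d ?a p \<eta> c * frame S d ?a p \<eta>' c) = (if \<eta> = \<eta>' then 1 else 0)"
    using adm_face[OF adm _ p] by auto
  have "(\<Sum>\<alpha><3. Q p \<alpha> * tvec S Q d p \<alpha>) - (\<Sum>c<9. Q p c * svec S Q d ?a p c)
     = (\<Sum>\<eta><3. vrot S Q d ?a p \<eta> * trot S Q d ?a p \<eta>)
        - ((\<Sum>\<eta><3. Gpen S Q d ?a p \<eta> * vrot S Q d ?a p \<eta>) + (\<Sum>\<eta><3. Gtil S Q d ?a p \<eta> * trot S Q d ?a p \<eta>))"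
    unfolding svec_dot G_dot Gt_dot vT_dot[OF O] using n0 by simp
  also have "\<dots> = (\<Sum>\<eta><3. vrot S Q d ?a p \<eta> * trot S Q d ?a p \<eta>
        - (Gpen S Q d ?a p \<eta> * vrot S Q d ?a p \<eta> + Gtil S Q d ?a p \<eta> * trot S Q d ?a p \<eta>))"
    by (simp add: sum_subtractf sum.distrib)
  also have "\<dots> = (\<Sum>\<eta><3. vhat S Q d ?a p \<eta> * That S Q d ?a p \<eta> - (Gpen S Q d ?a p \<eta>)\<^sup>2 / Zi S d ?a p \<eta>)"
    by (rule sum.cong[OF refl], rule face_n_pt[OF n0]) (use Z in auto)
  finally show ?thesis .
qed

lemma pt_0:
  assumes adm: "admissible S" and p: "p \<in> grid S" "coord d p = 0"
  shows "- (\<Sum>\<alpha><3. Q p \<alpha> * tvec S Q d p \<alpha>) - (\<Sum>c<9. Q p c * svec S Q d 0 p c)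
    = - (\<Sum>\<eta><3. vhat S Q d 0 p \<eta> * That S Q d 0 p \<eta> + (Gpen S Q d 0 p \<eta>)\<^sup>2 / Zi S d 0 p \<eta>)"
proof -
  have Z: "\<forall>\<eta><3. Zi S d 0 p \<eta> > 0 \<and> -1 \<le> gam S d 0 p \<eta> \<and> gam S d 0 p \<eta> \<le> 1"
   and O: "\<forall>\<eta><3. \<forall>\<eta>'<3. (\<Sum>c<3. frame S d 0 p \<eta> c * frame S d 0 p \<eta>' c) = (if \<eta> = \<eta>' then 1 else 0)"
    using adm_face[OF adm _ p] by auto
  have "- (\<Sum>\<alpha><3. Q p \<alpha> * tvec S Q d p \<alpha>) - (\<Sum>c<9. Q p c * svec S Q d 0 p c)
     = - (\<Sum>\<eta><3. vrot S Q d 0 p \<eta> * trot S Q d 0 p \<eta>)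
        - ((\<Sum>\<eta><3. Gpen S Q d 0 p \<eta> * vrot S Q d 0 p \<eta>) - (\<Sum>\<eta><3. Gtil S Q d 0 p \<eta> * trot S Q d 0 p \<eta>))"
    unfolding svec_dot G_dot Gt_dot vT_dot[OF O] by simp
  also have "\<dots> = (\<Sum>\<eta><3. - (vrot S Q d 0 p \<eta> * trot S Q d 0 p \<eta>)
        - (Gpen S Q d 0 p \<eta> * vrot S Q d 0 p \<eta> - Gtil S Q d 0 p \<eta> * trot S Q d 0 p \<eta>))"
    by (simp add: sum_subtractf sum_negf)
  also have "\<dots> = (\<Sum>\<eta><3. - (vhat S Q d 0 p \<eta> * That S Q d 0 p \<eta> + (Gpen S Q d 0 p \<eta>)\<^sup>2 / Zi S d 0 p \<eta>))"
    by (rule sum.cong[OF refl], rule face_0_pt) (use Z in auto)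
  also have "\<dots> = - (\<Sum>\<eta><3. vhat S Q d 0 p \<eta> * That S Q d 0 p \<eta> + (Gpen S Q d 0 p \<eta>)\<^sup>2 / Zi S d 0 p \<eta>)"
    by (rule sum_negf)
  finally show ?thesis .
qed

lemma dir_id:
  assumes adm: "admissible S"
  shows "(\<Sum>p\<in>grid S. hprod S p * (\<Sum>c<9. Q p c * (applyD S (Dm S d) d (\<lambda>q. flux S Q d q c) p + Bterm S Q d p c)))
     + (\<Sum>p\<in>grid S. hprod S p * (\<Sum>c<9. Q p c * sat S Q d 0 p c))
     + (\<Sum>p\<in>grid S. hprod S p * (\<Sum>c<9. Q p c * sat S Q d (nn S d) p c))
   = face_int S d (nn S d) (\<lambda>p. \<Sum>\<eta><3. vhat S Q d (nn S d) p \<eta> * That S Q d (nn S d) p \<eta> - (Gpen S Q d (nn S d) p \<eta>)\<^sup>2 / Zi S d (nn S d) p \<eta>)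
     + face_int S d 0 (\<lambda>p. - (\<Sum>\<eta><3. vhat S Q d 0 p \<eta> * That S Q d 0 p \<eta> + (Gpen S Q d 0 p \<eta>)\<^sup>2 / Zi S d 0 p \<eta>))"
proof -
  let ?X = "\<lambda>p. \<Sum>\<alpha><3. Q p \<alpha> * tvec S Q d p \<alpha>"
  let ?Y = "\<lambda>a p. \<Sum>c<9. Q p c * svec S Q d a p c"
  have "face_int S d (nn S d) (\<lambda>p. ?X p - ?Y (nn S d) p) = face_int S d (nn S d) (\<lambda>p. \<Sum>\<eta><3. vhat S Q d (nn S d) p \<eta> * That S Q d (nn S d) p \<eta> - (Gpen S Q d (nn S d) p \<eta>)\<^sup>2 / Zi S d (nn S d) p \<eta>)"
    by (rule fi_cong) (rule pt_n[OF adm])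
  moreover have "face_int S d 0 (\<lambda>p. - ?X p - ?Y 0 p) = face_int S d 0 (\<lambda>p. - (\<Sum>\<eta><3. vhat S Q d 0 p \<eta> * That S Q d 0 p \<eta> + (Gpen S Q d 0 p \<eta>)\<^sup>2 / Zi S d 0 p \<eta>))"
    by (rule fi_cong) (rule pt_0[OF adm])
  ultimately show ?thesis
    unfolding vol[OF adm] satT[OF adm le0] satT[OF adm order_refl] fi_diff fi_neg by simp
qed

lemma fb_d:
  fixes A B C D :: "pt \<Rightarrow> nat \<Rightarrow> real"
  shows "face_int S d b (\<lambda>p. \<Sum>\<eta><3. A p \<eta> - B p \<eta>) + face_int S d a (\<lambda>p. - (\<Sum>\<eta><3. C p \<eta> + D p \<eta>))
   = (face_int S d b (\<lambda>p. \<Sum>\<eta><3. A p \<eta>) - face_int S d a (\<lambda>p. \<Sum>\<eta><3. C p \<eta>))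
     - (face_int S d a (\<lambda>p. \<Sum>\<eta><3. D p \<eta>) + face_int S d b (\<lambda>p. \<Sum>\<eta><3. B p \<eta>))"
  unfolding face_int_def
  by (simp add: sum_subtractf sum.distrib sum_negf right_diff_distrib distrib_left)

lemma fb_eq:
  assumes adm: "admissible S"
  shows "Fluc S Q + bdry S Q = sumdir (\<lambda>d. face_int S d (nn S d) (\<lambda>p. \<Sum>\<eta><3. vhat S Q d (nn S d) p \<eta> * That S Q d (nn S d) p \<eta> - (Gpen S Q d (nn S d) p \<eta>)\<^sup>2 / Zi S d (nn S d) p \<eta>)
     + face_int S d 0 (\<lambda>p. - (\<Sum>\<eta><3. vhat S Q d 0 p \<eta> * That S Q d 0 p \<eta> + (Gpen S Q d 0 p \<eta>)\<^sup>2 / Zi S d 0 p \<eta>)))"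
proof -
  have e: "\<And>d. (\<Sum>a\<in>{0, nn S d}. face_int S d a (\<lambda>p. \<Sum>\<eta><3. (Gpen S Q d a p \<eta>)\<^sup>2 / Zi S d a p \<eta>))
     = face_int S d 0 (\<lambda>p. \<Sum>\<eta><3. (Gpen S Q d 0 p \<eta>)\<^sup>2 / Zi S d 0 p \<eta>)
       + face_int S d (nn S d) (\<lambda>p. \<Sum>\<eta><3. (Gpen S Q d (nn S d) p \<eta>)\<^sup>2 / Zi S d (nn S d) p \<eta>)"
  proof -
    fix d
    have "0 \<notin> {nn S d}" using adm_n[OF adm, of d] by simp
    thus "?thesis d" by simp
  qed
  show ?thesis
    unfolding Fluc_def bdry_def sumdir_def e fb_d by (simp only: diff_conv_add_uminus minus_add_distrib add_ac)
qed

lemma total: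
  assumes adm: "admissible S"
  shows "(\<Sum>p\<in>grid S. hprod S p * (\<Sum>c<9. Q p c * rhs S Q p c)) = Fluc S Q + bdry S Q"
proof -
  have "(\<Sum>p\<in>grid S. hprod S p * (\<Sum>c<9. Q p c * rhs S Q p c))
    = sumdir (\<lambda>d. (\<Sum>p\<in>grid S. hprod S p * (\<Sum>c<9. Q p c * (applyD S (Dm S d) d (\<lambda>q. flux S Q d q c) p + Bterm S Q d p c)))
     + (\<Sum>p\<in>grid S. hprod S p * (\<Sum>c<9. Q p c * sat S Q d 0 p c))
     + (\<Sum>p\<in>grid S. hprod S p * (\<Sum>c<9. Q p c * sat S Q d (nn S d) p c)))"
    unfolding rhs_def sumdir_def by (simp add: distrib_left sum.distrib)
  also have "\<dots> = sumdir (\<lambda>d. face_int S d (nn S d) (\<lambda>p. \<Sum>\<eta><3. vhat S Q d (nn S d) p \<eta> * That S Q d (nn S d) p \<eta> - (Gpen S Q d (nn S d) p \<eta>)\<^sup>2 / Zi S d (nn S d) p \<eta>)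
     + face_int S d 0 (\<lambda>p. - (\<Sum>\<eta><3. vhat S Q d 0 p \<eta> * That S Q d 0 p \<eta> + (Gpen S Q d 0 p \<eta>)\<^sup>2 / Zi S d 0 p \<eta>)))"
    by (simp only: dir_id[OF adm])
  also have "\<dots> = Fluc S Q + bdry S Q" by (rule fb_eq[OF adm, symmetric])
  finally show ?thesis .
qed

lemma ineqs:
  assumes adm: "admissible S"
  shows "Fluc S Q \<le> 0" "Fluc S Q + bdry S Q \<le> 0"
proof -
  have G2: "0 \<le> (\<Sum>\<eta><3. (Gpen S Q d a p \<eta>)\<^sup>2 / Zi S d a p \<eta>)"
    if "a \<in> {0, nn S d}" "p \<in> grid S" "coord d p = a" for d a p
    using adm_face(1)[OF adm that] by (intro sum_nonneg) auto
  have F: "0 \<le> (\<Sum>a\<in>{0, nn S d}. face_int S d a (\<lambda>p. \<Sum>\<eta><3. (Gpen S Q d a p \<eta>)\<^sup>2 / Zi S d a p \<eta>))" for d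
    by (intro sum_nonneg fi_nonneg[OF adm] G2) auto
  show "Fluc S Q \<le> 0" unfolding Fluc_def sumdir_def using F[of Dq] F[of Dr] F[of Ds] by linarith
  have Tn: "face_int S d (nn S d) (\<lambda>p. \<Sum>\<eta><3. vhat S Q d (nn S d) p \<eta> * That S Q d (nn S d) p \<eta> - (Gpen S Q d (nn S d) p \<eta>)\<^sup>2 / Zi S d (nn S d) p \<eta>) \<le> 0" for d
  proof (rule fi_nonpos[OF adm], rule sum_nonpos)
    fix p \<eta> assume p: "p \<in> grid S" "coord d p = nn S d" and e: "\<eta> \<in> {..<3::nat}"
    have Z: "Zi S d (nn S d) p \<eta> > 0 \<and> -1 \<le> gam S d (nn S d) p \<eta> \<and> gam S d (nn S d) p \<eta> \<le> 1"
      using adm_face(1)[OF adm _ p] e by auto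
    have "vhat S Q d (nn S d) p \<eta> * That S Q d (nn S d) p \<eta> \<le> 0"
      using Z by (intro face_n_sign adm_n[OF adm]) auto
    moreover have "0 \<le> (Gpen S Q d (nn S d) p \<eta>)\<^sup>2 / Zi S d (nn S d) p \<eta>" using Z by auto
    ultimately show "vhat S Q d (nn S d) p \<eta> * That S Q d (nn S d) p \<eta> - (Gpen S Q d (nn S d) p \<eta>)\<^sup>2 / Zi S d (nn S d) p \<eta> \<le> 0"
      by linarith
  qed
  have T0: "face_int S d 0 (\<lambda>p. - (\<Sum>\<eta><3. vhat S Q d 0 p \<eta> * That S Q d 0 p \<eta> + (Gpen S Q d 0 p \<eta>)\<^sup>2 / Zi S d 0 p \<eta>)) \<le> 0" for d
  proof (rule fi_nonpos[OF adm])
    fix p assume p: "p \<in> grid S" "coord d p = 0"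
    have "0 \<le> (\<Sum>\<eta><3. vhat S Q d 0 p \<eta> * That S Q d 0 p \<eta> + (Gpen S Q d 0 p \<eta>)\<^sup>2 / Zi S d 0 p \<eta>)"
    proof (rule sum_nonneg)
      fix \<eta> assume e: "\<eta> \<in> {..<3::nat}"
      have Z: "Zi S d 0 p \<eta> > 0 \<and> -1 \<le> gam S d 0 p \<eta> \<and> gam S d 0 p \<eta> \<le> 1"
        using adm_face(1)[OF adm _ p] e by auto
      have "vhat S Q d 0 p \<eta> * That S Q d 0 p \<eta> \<ge> 0" using Z by (intro face_0_sign) auto
      moreover have "0 \<le> (Gpen S Q d 0 p \<eta>)\<^sup>2 / Zi S d 0 p \<eta>" using Z by auto
      ultimately show "0 \<le> vhat S Q d 0 p \<eta> * That S Q d 0 p \<eta> + (Gpen S Q d 0 p \<eta>)\<^sup>2 / Zi S d 0 p \<eta>" by linarith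
    qed
    thus "- (\<Sum>\<eta><3. vhat S Q d 0 p \<eta> * That S Q d 0 p \<eta> + (Gpen S Q d 0 p \<eta>)\<^sup>2 / Zi S d 0 p \<eta>) \<le> 0" by linarith
  qed
  have "Fluc S Q + bdry S Q = sumdir (\<lambda>d. face_int S d (nn S d) (\<lambda>p. \<Sum>\<eta><3. vhat S Q d (nn S d) p \<eta> * That S Q d (nn S d) p \<eta> - (Gpen S Q d (nn S d) p \<eta>)\<^sup>2 / Zi S d (nn S d) p \<eta>)
     + face_int S d 0 (\<lambda>p. - (\<Sum>\<eta><3. vhat S Q d 0 p \<eta> * That S Q d 0 p \<eta> + (Gpen S Q d 0 p \<eta>)\<^sup>2 / Zi S d 0 p \<eta>)))"
    by (rule fb_eq[OF adm])
  also have "\<dots> \<le> 0" unfolding sumdir_def by (intro add_nonpos_nonpos Tn T0)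
  finally show "Fluc S Q + bdry S Q \<le> 0" .
qed

lemma pinv_expand:
  "(\<Sum>c<9. X c * pinv S p Y c) = Jac S p * rho S p * (\<Sum>c<3. X c * Y c)
     + Jac S p * (\<Sum>a<6. \<Sum>b<6. X (3+a) * Sc S p a b * Y (3+b))"
  by (simp add: s9 s3 s6 pinv_def algebra_simps)

lemma pinv_sym:
  assumes sym: "\<forall>a<6. \<forall>b<6. Sc S p a b = Sc S p b a"
  shows "(\<Sum>c<9. X c * pinv S p Y c) = (\<Sum>c<9. Y c * pinv S p X c)"
proof -
  have "(\<Sum>a<6. \<Sum>b<6. Y (3+a) * Sc S p a b * X (3+b)) = (\<Sum>a<6. \<Sum>b<6. X (3+b) * Sc S p b a * Y (3+a))"
    by (intro sum.cong refl) (use sym in auto)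
  also have "\<dots> = (\<Sum>b<6. \<Sum>a<6. X (3+b) * Sc S p b a * Y (3+a))" by (rule sum.swap)
  finally have e: "(\<Sum>a<6. \<Sum>b<6. Y (3+a) * Sc S p a b * X (3+b)) = (\<Sum>a<6. \<Sum>b<6. X (3+a) * Sc S p a b * Y (3+b))" .
  show ?thesis unfolding pinv_expand e by (simp add: mult.commute)
qed

lemma pinv_deriv:
  assumes "\<forall>c<9. ((\<lambda>s. X s c) has_real_derivative X' c) (at t)"
  shows "((\<lambda>s. pinv S p (X s) c) has_real_derivative pinv S p X' c) (at t)"
proof (cases "c < 3")
  case True
  thus ?thesis unfolding pinv_def using assms by (simp add: DERIV_cmult)
next
  case False
  show ?thesis
  proof (cases "c < 9")
    case True
    have "((\<lambda>s. \<Sum>b<6. Sc S p (c - 3) b * X s (3 + b)) has_real_derivative (\<Sum>b<6. Sc S p (c - 3) b * X' (3 + b))) (at t)"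
      by (intro DERIV_sum DERIV_cmult) (use assms in auto)
    thus ?thesis unfolding pinv_def using True False by (simp add: DERIV_cmult)
  next
    case False
    thus ?thesis unfolding pinv_def by simp
  qed
qed

theorem theorem5p2:
  fixes S :: setting and Q Q' :: "real \<Rightarrow> pt \<Rightarrow> nat \<Rightarrow> real" and T :: "real set"
  assumes adm: "admissible S"
    and diff: "\<forall>t\<in>T. \<forall>p\<in>grid S. \<forall>c<9. ((\<lambda>s. Q s p c) has_real_derivative Q' t p c) (at t)"
    and ode: "\<forall>t\<in>T. \<forall>p\<in>grid S. \<forall>c<9. pinv S p (Q' t p) c = rhs S (Q t) p c"
  shows "\<forall>t\<in>T. ((\<lambda>s. energy S (Q s)) has_real_derivative (Fluc S (Q t) + bdry S (Q t))) (at t)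
              \<and> Fluc S (Q t) + bdry S (Q t) \<le> 0 \<and> Fluc S (Q t) \<le> 0"
proof
  fix t assume t: "t \<in> T"
  have D: "((\<lambda>s. energy S (Q s)) has_real_derivative
      (1/2) * (\<Sum>p\<in>grid S. hprod S p * (\<Sum>c<9. Q' t p c * pinv S p (Q t p) c + pinv S p (Q' t p) c * Q t p c))) (at t)"
    unfolding energy_def
  proof (intro DERIV_cmult DERIV_sum DERIV_mult)
    fix p c assume p: "p \<in> grid S" and c: "c \<in> {..<9::nat}"
    show "((\<lambda>s. Q s p c) has_real_derivative Q' t p c) (at t)" using diff t p c by auto
    show "((\<lambda>s. pinv S p (Q s p) c) has_real_derivative pinv S p (Q' t p) c) (at t)"
      by (rule pinv_deriv) (use diff t p in auto)
  qed
  have "(1/2) * (\<Sum>p\<in>grid S. hprod S p * (\<Sum>c<9. Q' t p c * pinv S p (Q t p) c + pinv S p (Q' t p) c * Q t p c))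
      = (\<Sum>p\<in>grid S. hprod S p * (\<Sum>c<9. Q t p c * rhs S (Q t) p c))"
    unfolding sum_distrib_left[of "1/2"]
  proof (rule sum.cong[OF refl])
    fix p assume p: "p \<in> grid S"
    have "(\<Sum>c<9. Q' t p c * pinv S p (Q t p) c + pinv S p (Q' t p) c * Q t p c)
        = (\<Sum>c<9. Q' t p c * pinv S p (Q t p) c) + (\<Sum>c<9. Q t p c * pinv S p (Q' t p) c)"
      by (simp add: sum.distrib mult.commute)
    also have "\<dots> = 2 * (\<Sum>c<9. Q t p c * pinv S p (Q' t p) c)"
      using pinv_sym[OF adm_pt(4)[OF adm p], of "Q' t p" "Q t p"] by simp
    also have "(\<Sum>c<9. Q t p c * pinv S p (Q' t p) c) = (\<Sum>c<9. Q t p c * rhs S (Q t) p c)"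
      by (rule sum.cong[OF refl]) (use ode t p in auto)
    finally show "1/2 * (hprod S p * (\<Sum>c<9. Q' t p c * pinv S p (Q t p) c + pinv S p (Q' t p) c * Q t p c))
        = hprod S p * (\<Sum>c<9. Q t p c * rhs S (Q t) p c)" by simp
  qed
  also have "\<dots> = Fluc S (Q t) + bdry S (Q t)" by (rule total[OF adm])
  finally have eq: "(1/2) * (\<Sum>p\<in>grid S. hprod S p * (\<Sum>c<9. Q' t p c * pinv S p (Q t p) c + pinv S p (Q' t p) c * Q t p c)) = Fluc S (Q t) + bdry S (Q t)" .
  have "((\<lambda>s. energy S (Q s)) has_real_derivative (Fluc S (Q t) + bdry S (Q t))) (at t)"
    using D unfolding eq .
  thus "((\<lambda>s. energy S (Q s)) has_real_derivative (Fluc S (Q t) + bdry S (Q t))) (at t)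
              \<and> Fluc S (Q t) + bdry S (Q t) \<le> 0 \<and> Fluc S (Q t) \<le> 0"
    using ineqs[OF adm] by blast
qed

end
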